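(* Let $\beta\in(0,1)$, $z>0$, $c>0$, $\delta\in(0,1)$, and let $N$ and $\Delta$ be positive integers. Let $F$ be a continuous cumulative distribution function with support $[\underline{w},\overline{w}]$, $\underline{w}<\overline{w}$, and mean $\mu_w$, and assume $\underline{w}<(1-\beta)z+\beta\mu_w$ and $z+c<\overline{w}$. Put $\Upsilon(x)=\int_{\underline{w}}^{x}x\,dF(w)+\int_{x}^{\overline{w}}w\,dF(w)$. Let $w_R(0)$ be the unique solution in $[\underline{w},\overline{w}]$ of $x=z(1-\beta)+\beta\Upsilon(x)$ and $w_R(n)=(z+c)(1-\beta)+\beta\Upsilon(w_R(n-1))$ for $n\ge1$. Let $w_R^\delta(0)$ be the unique solution in $[\underline{w},\overline{w}]$ of $x=z(1-\beta)+\beta\delta\Upsilon(w_R(\Delta))+\beta(1-\delta)\Upsilon(x)$, and for $n=1,\dots,N$ let $w_R^{\delta}(n)=(z+c)(1-\beta)+\beta\delta\Upsilon(w_R(n-1+\Delta))+\beta(1-\delta)\Upsilon(w_R^\delta(n-1))$. Then $w_R(n+\Delta)>w_R^\delta(n)$ for all $n\in\{0,\dots,N\}$.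
   Context: Interpretation: $w_R(n)$ are reservation wages of a risk-neutral job searcher with $n$ remaining periods of unemployment benefits and no possibility of extension; $w_R^\delta(n)$ are reservation wages when benefits may (once) be extended by $\Delta$ periods with probability $\delta$ between offers. The lemma says that right after an extension the worker is more selective than just before it. *)

theory Defs
  imports "HOL-Probability.Probability"
begin

definition dist_support :: "real measure \<Rightarrow> real set" where
  "dist_support M = {x. \<forall>e>0. 0 < measure M (ball x e)}"

definition Upsilon :: "real measure \<Rightarrow> real \<Rightarrow> real \<Rightarrow> real \<Rightarrow> real" where
  "Upsilon M wl wu x = (LINT w:{wl..x}|M. x) + (LINT w:{x..wu}|M. w)"

fun wR :: "real \<Rightarrow> real \<Rightarrow> real \<Rightarrow> real \<Rightarrow> real \<Rightarrow> (real \<Rightarrow> real) \<Rightarrow> nat \<Rightarrow> real" where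
  "wR \<beta> z c wl wu U 0 = (THE x. x \<in> {wl..wu} \<and> x = z * (1 - \<beta>) + \<beta> * U x)"
| "wR \<beta> z c wl wu U (Suc n) = (z + c) * (1 - \<beta>) + \<beta> * U (wR \<beta> z c wl wu U n)"

text \<open>Reservation wages with possible extension by Delta periods with probability delta.\<close>
fun wRd :: "real \<Rightarrow> real \<Rightarrow> real \<Rightarrow> real \<Rightarrow> nat \<Rightarrow> real \<Rightarrow> real \<Rightarrow> (real \<Rightarrow> real) \<Rightarrow> nat \<Rightarrow> real" where
  "wRd \<beta> z c \<delta> \<Delta> wl wu U 0 =
     (THE x. x \<in> {wl..wu} \<and>
        x = z * (1 - \<beta>) + \<beta> * \<delta> * U (wR \<beta> z c wl wu U \<Delta>) + \<beta> * (1 - \<delta>) * U x)"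
| "wRd \<beta> z c \<delta> \<Delta> wl wu U (Suc n) =
     (z + c) * (1 - \<beta>) + \<beta> * \<delta> * U (wR \<beta> z c wl wu U (n + \<Delta>))
       + \<beta> * (1 - \<delta>) * U (wRd \<beta> z c \<delta> \<Delta> wl wu U n)"

end

theory Submission
  imports Defs
begin

lemma abstract_main:
  fixes \<beta> z c \<delta> wl wu \<mu> :: real and \<Delta> :: nat and U :: "real \<Rightarrow> real"
  assumes b0: "0 < \<beta>" and b1: "\<beta> < 1" and c0: "0 < c" and d0: "0 < \<delta>" and d1: "\<delta> < 1"
    and D0: "0 < \<Delta>"
    and mono: "\<And>x y. x \<le> y \<Longrightarrow> U x \<le> U y"
    and lip: "\<And>x y. x \<le> y \<Longrightarrow> U y - U x \<le> y - x"
    and cont: "continuous_on UNIV U"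
    and Umu: "\<And>x. \<mu> \<le> U x"
    and Uwu: "U wu = wu"
    and strict: "\<And>x y. x < y \<Longrightarrow> wl < y \<Longrightarrow> U x < U y"
    and hl: "wl < (1 - \<beta>) * z + \<beta> * \<mu>"
    and hu: "z + c < wu"
  shows "wRd \<beta> z c \<delta> \<Delta> wl wu U n < wR \<beta> z c wl wu U (n + \<Delta>)"
proof -
  let ?g = "\<lambda>x. x - z * (1 - \<beta>) - \<beta> * U x"
  have gstrict: "?g x < ?g y" if "x < y" for x y
  proof -
    have "U y - U x \<le> y - x" using lip that by simp
    hence "\<beta> * (U y - U x) \<le> \<beta> * (y - x)" using b0 by (simp add: mult_left_mono)
    moreover have "(1-\<beta>)*(y-x) > 0" using that b1 by simp
    moreover have "\<beta>*(y-x) = (y-x) - (1-\<beta>)*(y-x)" "\<beta> * (U y - U x) = \<beta> * U y - \<beta> * U x"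
      by (simp_all add: algebra_simps)
    ultimately show ?thesis by linarith
  qed
  have wlwu: "wl < wu"
  proof -
    have "\<beta> * \<mu> \<le> \<beta> * wu" using Umu[of wu] Uwu b0 by simp
    moreover have "(1 - \<beta>) * z \<le> (1 - \<beta>) * wu" using hu c0 b1 by simp
    ultimately show ?thesis using hl by (simp add: algebra_simps)
  qed
  have contg: "continuous_on {wl..wu} ?g"
    by (intro continuous_intros continuous_on_subset[OF cont]) auto
  have "?g wl < 0"
  proof -
    have "\<beta>*\<mu> \<le> \<beta> * U wl" using Umu[of wl] b0 by simp
    moreover have "z*(1-\<beta>) = (1-\<beta>)*z" by simp
    ultimately show ?thesis using hl by linarith
  qed
  moreover have "?g wu > 0"
  proof -
    have "(1-\<beta>)*(wu-z) > 0" using hu c0 b1 by simp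
    moreover have "(1-\<beta>)*(wu-z) = wu - z*(1-\<beta>) - \<beta>*wu" by (simp add: algebra_simps)
    ultimately show ?thesis using Uwu by simp
  qed
  ultimately obtain x0 where x0: "wl \<le> x0" "x0 \<le> wu" "?g x0 = 0"
    using IVT'[of ?g wl 0 wu] contg wlwu by force
  have x0gt: "wl < x0" using x0 \<open>?g wl < 0\<close> by (cases "wl = x0") (auto simp: order_le_less)
  have w0: "wR \<beta> z c wl wu U 0 = x0"
    apply simp
    apply (rule the_equality)
    using x0 apply simp
    subgoal for x
      by (cases x x0 rule: linorder_cases) (use gstrict[of x x0] gstrict[of x0 x] x0(3) in auto)
    done
  have w01: "wR \<beta> z c wl wu U 0 < wR \<beta> z c wl wu U 1"
  proof -
    have "c*(1-\<beta>) > 0" using c0 b1 by simp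
    moreover have "(z+c)*(1-\<beta>) = z*(1-\<beta>) + c*(1-\<beta>)" by (simp add: algebra_simps)
    ultimately show ?thesis using w0 x0 by simp
  qed
  have wmono: "wR \<beta> z c wl wu U n \<le> wR \<beta> z c wl wu U (Suc n)" for n
  proof (induction n)
    case 0 then show ?case using w01 by simp
  next
    case (Suc n)
    then show ?case using mono[OF Suc] b0 by (simp add: mult_left_mono)
  qed
  have wge: "wR \<beta> z c wl wu U 0 \<le> wR \<beta> z c wl wu U n" for n
    by (rule lift_Suc_mono_le[of "wR \<beta> z c wl wu U", OF wmono]) simp
  have wpos: "wR \<beta> z c wl wu U 0 < wR \<beta> z c wl wu U (Suc n)" for n
    using w01 lift_Suc_mono_le[of "wR \<beta> z c wl wu U", OF wmono, of 1 "Suc n"] by simp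
  have wle: "wR \<beta> z c wl wu U n \<le> wu" for n
  proof (induction n)
    case 0 then show ?case using w0 x0 by simp
  next
    case (Suc n)
    have "U (wR \<beta> z c wl wu U n) \<le> wu" using mono[OF Suc] Uwu by simp
    hence "\<beta> * U (wR \<beta> z c wl wu U n) \<le> \<beta> * wu" using b0 by (simp add: mult_left_mono)
    moreover have "(z+c)*(1-\<beta>) < wu*(1-\<beta>)" using hu b1 by simp
    moreover have "wu*(1-\<beta>) + \<beta>*wu = wu" by (simp add: algebra_simps)
    ultimately show ?case by simp
  qed
  have wgtl: "wl < wR \<beta> z c wl wu U n" for n using wge[of n] w0 x0gt by simp
  define a where "a = wR \<beta> z c wl wu U \<Delta>"
  let ?h = "\<lambda>x. x - z * (1 - \<beta>) - \<beta> * \<delta> * U a - \<beta> * (1 - \<delta>) * U x"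
  have hstrict: "?h x < ?h y" if "x < y" for x y
  proof -
    have "U y - U x \<le> y - x" using lip that by simp
    hence "\<beta> * (1 - \<delta>) * (U y - U x) \<le> \<beta> * (1 - \<delta>) * (y - x)" using b0 d1 by (simp add: mult_left_mono)
    moreover have "\<beta> * (1 - \<delta>) \<le> \<beta> * 1" using b0 d0 by (intro mult_left_mono) auto
    hence "(1 - \<beta> * (1 - \<delta>))*(y-x) > 0" using that b1 by simp
    moreover have "\<beta> * (1 - \<delta>)*(y-x) = (y-x) - (1 - \<beta> * (1 - \<delta>))*(y-x)"
       "\<beta> * (1 - \<delta>) * (U y - U x) = \<beta> * (1 - \<delta>) * U y - \<beta> * (1 - \<delta>) * U x"
      by (simp_all add: algebra_simps)
    ultimately show ?thesis by linarith
  qed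
  have conth: "continuous_on {wl..wu} ?h"
    by (intro continuous_intros continuous_on_subset[OF cont]) auto
  have "?h wl < 0"
  proof -
    have "\<mu> \<le> U a" "\<mu> \<le> U wl" using Umu by auto
    hence "\<beta> * \<delta> * \<mu> + \<beta> * (1 - \<delta>) * \<mu> \<le> \<beta> * \<delta> * U a + \<beta> * (1 - \<delta>) * U wl"
      using b0 d0 d1 by (intro add_mono mult_left_mono) auto
    thus ?thesis using hl by (simp add: algebra_simps)
  qed
  moreover have "?h a > 0"
  proof -
    have "?g a > ?g x0" using wpos[of "\<Delta> - 1"] D0 w0 unfolding a_def
      by (intro gstrict) simp
    thus ?thesis using x0 by (simp add: algebra_simps)
  qed
  moreover have "a \<le> wu" "wl < a" using wle wgtl a_def by auto
  ultimately obtain y0 where y0: "wl \<le> y0" "y0 \<le> a" "?h y0 = 0"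
    using IVT'[of ?h wl 0 a] conth continuous_on_subset[OF conth, of "{wl..a}"] by force
  have y0a: "y0 < a" using y0 \<open>?h a > 0\<close> by (cases "y0 = a") (auto simp: order_le_less)
  have wd0: "wRd \<beta> z c \<delta> \<Delta> wl wu U 0 = y0"
    apply (simp add: a_def[symmetric])
    apply (rule the_equality)
    using y0 \<open>a \<le> wu\<close> apply simp
    subgoal for x
      by (cases x y0 rule: linorder_cases) (use hstrict[of x y0] hstrict[of y0 x] y0(3) in auto)
    done
  show ?thesis
  proof (induction n)
    case 0 then show ?case using wd0 y0a a_def by simp
  next
    case (Suc n)
    have "U (wRd \<beta> z c \<delta> \<Delta> wl wu U n) < U (wR \<beta> z c wl wu U (n + \<Delta>))"
      using strict[OF Suc wgtl] .
    hence "\<beta> * (1 - \<delta>) * U (wRd \<beta> z c \<delta> \<Delta> wl wu U n) < \<beta> * (1 - \<delta>) * U (wR \<beta> z c wl wu U (n + \<Delta>))"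
      using b0 d1 by simp
    then show ?case by (simp add: algebra_simps)
  qed
qed
lemma conc:
  assumes M: "real_distribution M" and sup: "dist_support M = {wl..wu}"
  shows "AE w in M. w \<in> {wl..wu}"
proof -
  interpret real_distribution M by (rule M)
  define F where "F = {ball x e | x e. e > 0 \<and> measure M (ball x e) = 0}"
  have cov: "- {wl..wu} \<subseteq> \<Union>F"
  proof
    fix x assume "x \<in> - {wl..wu}"
    hence "x \<notin> dist_support M" using sup by simp
    then obtain e where "e > 0" "\<not> 0 < measure M (ball x e)" unfolding dist_support_def by auto
    hence "ball x e \<in> F" "x \<in> ball x e" unfolding F_def using measure_nonneg[of M "ball x e"] by auto
    thus "x \<in> \<Union>F" by blast
  qed
  obtain F' where F': "F' \<subseteq> F" "countable F'" "\<Union>F' = \<Union>F"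
    using Lindelof[of F] unfolding F_def by auto
  have "(\<Union>i\<in>F'. i) \<in> null_sets M"
  proof (rule null_sets_UN'[OF F'(2)])
    fix i assume "i \<in> F'"
    then obtain x e where "i = ball x e" "measure M (ball x e) = 0" using F'(1) F_def by auto
    moreover have "ball x e \<in> sets M" by (simp add: borel_open)
    ultimately show "i \<in> null_sets M" by (simp add: emeasure_eq_measure null_sets_def)
  qed
  moreover have "{w \<in> space M. \<not> w \<in> {wl..wu}} \<subseteq> (\<Union>i\<in>F'. i)" using cov F'(3) by auto
  ultimately show ?thesis by (rule AE_I')
qed

lemma Vprops:
  assumes M: "real_distribution M" and ae: "AE w in M. w \<in> {wl..wu}"
    and cont: "\<And>x. isCont (cdf M) x"
  defines "V \<equiv> \<lambda>x. LINT w|M. max x w"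
  shows "Upsilon M wl wu = V"
    and "\<And>x. integrable M (\<lambda>w. max x w)"
    and "integrable M (\<lambda>w. w)"
proof -
  interpret real_distribution M by (rule M)
  have mc: "borel_measurable M = borel_measurable borel"
    by (rule measurable_cong_sets) auto
  have intb: "integrable M f" if "f \<in> borel_measurable borel" "AE w in M. norm (f w) \<le> B" for f :: "real \<Rightarrow> real" and B
    apply (rule integrable_const_bound[of f B])
    using that mc by auto
  show intmax: "integrable M (\<lambda>w. max x w)" for x
    apply (rule intb[of _ "\<bar>x\<bar> + \<bar>wl\<bar> + \<bar>wu\<bar>"])
    apply measurable
    apply (rule eventually_mono[OF ae])
    by auto
  show intw: "integrable M (\<lambda>w. w)"
    apply (rule intb[of _ "\<bar>wl\<bar> + \<bar>wu\<bar>"])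
    apply measurable
    apply (rule eventually_mono[OF ae])
    by auto
  show "Upsilon M wl wu = V"
  proof
    fix x
    have int1: "integrable M (\<lambda>w. indicator {wl..x} w *\<^sub>R x)"
      apply (rule intb[of _ "\<bar>x\<bar>"])
      apply measurable
      by (simp add: indicator_def)
    have int2: "integrable M (\<lambda>w. indicator {x..wu} w *\<^sub>R w)"
      apply (rule intb[of _ "\<bar>wl\<bar> + \<bar>wu\<bar>"])
      apply measurable
      apply (rule eventually_mono[OF ae])
      by (auto simp: indicator_def)
    have "measure M {x} = 0" using cont[of x] isCont_cdf[of x] by simp
    hence "{x} \<in> null_sets M" by (simp add: emeasure_eq_measure null_sets_def)
    hence aex: "AE w in M. w \<noteq> x" by (rule AE_I') auto
    have "V x = (LINT w|M. indicator {wl..x} w *\<^sub>R x + indicator {x..wu} w *\<^sub>R w)"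
      unfolding V_def
      apply (rule integral_cong_AE)
        apply measurable
      apply (rule eventually_mono[OF eventually_conj[OF ae aex]])
      by (simp add: indicator_def)
    also have "\<dots> = Upsilon M wl wu x"
      unfolding Upsilon_def set_lebesgue_integral_def
      by (rule Bochner_Integration.integral_add[OF int1 int2])
    finally show "Upsilon M wl wu x = V x" by simp
  qed
qed

lemma Vprops2:
  assumes M: "real_distribution M" and ae: "AE w in M. w \<in> {wl..wu}"
    and wlsup: "wl \<in> dist_support M"
    and im: "\<And>x. integrable M (\<lambda>w. max x w)" and iw: "integrable M (\<lambda>w. w)"
  defines "V \<equiv> \<lambda>x. LINT w|M. max x w"
  shows "\<And>x y. x \<le> y \<Longrightarrow> V x \<le> V y"
    and "\<And>x y. x \<le> y \<Longrightarrow> V y - V x \<le> y - x"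
    and "\<And>x. (LINT w|M. w) \<le> V x"
    and "V wu = wu"
    and "\<And>x y. x < y \<Longrightarrow> wl < y \<Longrightarrow> V x < V y"
proof -
  interpret real_distribution M by (rule M)
  have p1: "prob UNIV = 1" using prob_space by simp
  have diff: "V y - V x = (LINT w|M. max y w - max x w)" for x y
    unfolding V_def by (rule Bochner_Integration.integral_diff[symmetric, OF im im])
  show "V x \<le> V y" if "x \<le> y" for x y
    unfolding V_def by (rule integral_mono[OF im im]) (use that in auto)
  show "V y - V x \<le> y - x" if "x \<le> y" for x y
  proof -
    have "(LINT w|M. max y w - max x w) \<le> (LINT w|M. y - x)"
      by (rule integral_mono) (use im that in auto)
    thus ?thesis using diff[of y x] by (simp add: p1)
  qed
  show "(LINT w|M. w) \<le> V x" for x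
    unfolding V_def by (rule integral_mono[OF iw im]) auto
  show "V wu = wu"
  proof -
    have "V wu = (LINT w|M. wu)"
      unfolding V_def
      apply (rule integral_cong_AE)
        apply measurable
      apply (rule eventually_mono[OF ae])
      by auto
    thus ?thesis by (simp add: p1)
  qed
  show "V x < V y" if xy: "x < y" "wl < y" for x y
  proof -
    define m where "m = max ((x+y)/2) ((wl+y)/2)"
    have m: "x < m" "wl < m" "m < y" using xy unfolding m_def max_def by auto
    have "ball wl (m - wl) \<subseteq> {..m}" by (auto simp: dist_real_def)
    hence "measure M (ball wl (m - wl)) \<le> measure M {..m}"
      by (intro finite_measure_mono) auto
    moreover have "0 < measure M (ball wl (m - wl))" using wlsup m unfolding dist_support_def by auto
    ultimately have pos: "0 < measure M {..m}" by simp
    have int3: "integrable M (\<lambda>w. indicator {..m} w * (y - m))"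
      by (intro integrable_mult_left integrable_real_indicator) (auto simp: emeasure_eq_measure)
    have "(LINT w|M. indicator {..m} w * (y - m)) \<le> (LINT w|M. max y w - max x w)"
      by (rule integral_mono[OF int3]) (use im m in \<open>auto simp: indicator_def\<close>)
    moreover have "(LINT w|M. indicator {..m} w * (y - m)) = measure M {..m} * (y - m)"
      by simp
    moreover have "0 < measure M {..m} * (y - m)" using pos m by simp
    ultimately show ?thesis using diff[of y x] by simp
  qed
qed

theorem lemma5:
  fixes \<beta> z c \<delta> wl wu :: real and N \<Delta> :: nat and M :: "real measure"
  assumes "0 < \<beta>" "\<beta> < 1" "0 < z" "0 < c" "0 < \<delta>" "\<delta> < 1"
    and "0 < N" "0 < \<Delta>"
    and "real_distribution M"
    and "\<And>x. isCont (cdf M) x"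
    and "dist_support M = {wl..wu}" "wl < wu"
    and "wl < (1 - \<beta>) * z + \<beta> * (LINT w|M. w)"
    and "z + c < wu"
  shows "\<forall>n \<le> N. wR \<beta> z c wl wu (Upsilon M wl wu) (n + \<Delta>)
                 > wRd \<beta> z c \<delta> \<Delta> wl wu (Upsilon M wl wu) n"
proof -
  have ae: "AE w in M. w \<in> {wl..wu}" by (rule conc) (use assms in auto)
  note V1 = Vprops[OF assms(9) ae assms(10)]
  have wls: "wl \<in> dist_support M" using assms(11,12) by simp
  note V2 = Vprops2[OF assms(9) ae wls V1(2) V1(3)]
  let ?V = "\<lambda>x. LINT w|M. max x w"
  have contV: "continuous_on UNIV ?V"
  proof (rule lipschitz_on_continuous_on)
    show "1-lipschitz_on UNIV ?V"
    proof (rule lipschitz_onI)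
      fix x y :: real
      show "dist (?V x) (?V y) \<le> 1 * dist x y"
        using V2(1)[of x y] V2(1)[of y x] V2(2)[of x y] V2(2)[of y x]
        by (cases "x \<le> y") (auto simp: dist_real_def)
    qed simp
  qed
  show ?thesis
    unfolding V1(1)
    using abstract_main[of \<beta> c \<delta> \<Delta> ?V "LINT w|M. w" wu wl z, OF assms(1,2,4,5,6,8) V2(1,2) contV V2(3,4,5) assms(13,14)]
    by simp
qed

end
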